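(* For any function $\varphi:\mathbb{Z}_{\ge 0}\to\mathbb{R}$ that is concave and nondecreasing with $\varphi(0)=0$, the Poisson concavity ratio satisfies $\alpha_\varphi\ge 1-\frac{1}{e}$.
   Context: A function $\varphi:\mathbb{Z}_{\ge0}\to\mathbb{R}$ is concave if $\varphi(x+1)-\varphi(x)$ is nonincreasing in $x$. The Poisson concavity ratio is $\alpha_\varphi=\inf_{x\in\mathbb{Z}_{\ge1}}\alpha_\varphi(x)$ where $\alpha_\varphi(x)=\frac{\mathbb{E}_{X\sim\mathrm{Pois}(x)}[\varphi(X)]}{\varphi(x)}$ (defined when $\varphi(x)>0$ for positive integers $x$). *)

theory Defs
  imports "HOL-Probability.Probability"
begin

definition concave_nat :: "(nat \<Rightarrow> real) \<Rightarrow> bool" where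
  "concave_nat \<phi> \<longleftrightarrow> (\<forall>x. \<phi> (Suc (Suc x)) - \<phi> (Suc x) \<le> \<phi> (Suc x) - \<phi> x)"

definition poisson_ratio :: "(nat \<Rightarrow> real) \<Rightarrow> nat \<Rightarrow> real" where
  "poisson_ratio \<phi> x = measure_pmf.expectation (poisson_pmf (real x)) \<phi> / \<phi> x"

definition poisson_concavity_ratio :: "(nat \<Rightarrow> real) \<Rightarrow> real" where
  "poisson_concavity_ratio \<phi> = (INF x\<in>{1..}. poisson_ratio \<phi> x)"

end

theory Submission
  imports Defs
begin

lemma diff_anti:
  assumes "concave_nat \<phi>" "j \<le> k"
  shows "\<phi> (Suc k) - \<phi> k \<le> \<phi> (Suc j) - \<phi> j"
  using assms(2)
proof (induction k rule: dec_induct)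
  case base then show ?case by simp
next
  case (step k)
  have "\<phi> (Suc (Suc k)) - \<phi> (Suc k) \<le> \<phi> (Suc k) - \<phi> k"
    using assms(1) unfolding concave_nat_def by blast
  then show ?case using step by linarith
qed

lemma step_ratio:
  assumes "concave_nat \<phi>" "\<phi> 0 = 0"
  shows "real k * \<phi> (Suc k) \<le> real (Suc k) * \<phi> k"
proof -
  have tel: "\<phi> k = (\<Sum>j<k. \<phi> (Suc j) - \<phi> j)"
    using sum_lessThan_telescope[of \<phi> k] assms(2) by simp
  have "(\<Sum>j<k. \<phi> (Suc k) - \<phi> k) \<le> (\<Sum>j<k. \<phi> (Suc j) - \<phi> j)"
    by (intro sum_mono diff_anti[OF assms(1)]) auto
  then have "real k * (\<phi> (Suc k) - \<phi> k) \<le> \<phi> k" using tel by simp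
  then show ?thesis by (simp add: algebra_simps)
qed

lemma chord:
  assumes "concave_nat \<phi>" "\<phi> 0 = 0" "k \<le> n"
  shows "real k * \<phi> n \<le> real n * \<phi> k"
  using assms(3)
proof (induction n rule: dec_induct)
  case base then show ?case by simp
next
  case (step n)
  show ?case
  proof (cases "n = 0")
    case True then show ?thesis using step assms(2) by simp
  next
    case False
    have r: "real n * \<phi> (Suc n) \<le> real (Suc n) * \<phi> n" by (rule step_ratio[OF assms(1,2)])
    have "real n * (real k * \<phi> (Suc n)) = real k * (real n * \<phi> (Suc n))" by simp
    also have "\<dots> \<le> real k * (real (Suc n) * \<phi> n)" using r by (intro mult_left_mono) auto
    also have "\<dots> = real (Suc n) * (real k * \<phi> n)" by simp
    also have "\<dots> \<le> real (Suc n) * (real n * \<phi> k)" using step.IH by (intro mult_left_mono) auto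
    also have "\<dots> = real n * (real (Suc n) * \<phi> k)" by simp
    finally show ?thesis using False by (simp add: mult_le_cancel_left_pos)
  qed
qed

lemma tele_sum:
  fixes x :: real
  shows "(\<Sum>k<Suc m. (x - real k) * x ^ k / fact k) = x ^ Suc m / fact m"
proof (induction m)
  case 0 then show ?case by simp
next
  case (Suc m)
  have "(\<Sum>k<Suc (Suc m). (x - real k) * x ^ k / fact k) = x ^ Suc m / fact m + (x - real (Suc m)) * x ^ Suc m / fact (Suc m)"
    using Suc by simp
  also have "\<dots> = x ^ Suc (Suc m) / fact (Suc m)"
    by (simp add: field_simps fact_Suc del: of_nat_Suc)
  finally show ?case .
qed

lemma stirling_weak: "real (Suc m) ^ Suc m \<le> fact (Suc m) * exp (real m)"
proof (induction m)
  case 0 then show ?case by simp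
next
  case (Suc m)
  have "(real (Suc (Suc m)) / real (Suc m)) ^ Suc m = (1 + 1 / real (Suc m)) ^ Suc m"
    by (simp add: field_simps)
  also have "\<dots> \<le> exp (1 / real (Suc m)) ^ Suc m"
    by (intro power_mono) (auto simp: exp_ge_add_one_self add.commute)
  also have "\<dots> = exp 1"
    by (subst exp_of_nat_mult[symmetric]) simp
  finally have e: "real (Suc (Suc m)) ^ Suc m \<le> exp 1 * real (Suc m) ^ Suc m"
    by (simp add: power_divide divide_le_eq)
  have "real (Suc (Suc m)) ^ Suc (Suc m) = real (Suc (Suc m)) * real (Suc (Suc m)) ^ Suc m" by simp
  also have "\<dots> \<le> real (Suc (Suc m)) * (exp 1 * (fact (Suc m) * exp (real m)))"
  proof -
    have "exp 1 * real (Suc m) ^ Suc m \<le> exp 1 * (fact (Suc m) * exp (real m))"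
      using Suc.IH by (intro mult_left_mono) auto
    with e have "real (Suc (Suc m)) ^ Suc m \<le> exp 1 * (fact (Suc m) * exp (real m))"
      by (rule order.trans)
    then show ?thesis by (intro mult_left_mono) simp_all
  qed
  also have "\<dots> = fact (Suc (Suc m)) * exp (real (Suc m))"
  proof -
    have "fact (Suc (Suc m)) = real (Suc (Suc m)) * (fact (Suc m) :: real)" by (rule fact_Suc)
    moreover have "exp (real (Suc m)) = exp 1 * exp (real m)" by (simp add: exp_add[symmetric])
    ultimately show ?thesis by (simp only: mult_ac)
  qed
  finally show ?case .
qed


lemma integrable_poisson_real: "integrable (measure_pmf (poisson_pmf x)) real" if "x > 0" for x :: real
proof -
  have "summable (\<lambda>k. inverse (fact k) * (2*x) ^ k * exp (-x))"
    by (intro summable_mult2 summable_exp)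
  moreover have "norm (norm (x ^ k / fact k * exp (- x) * real k)) \<le> inverse (fact k) * (2*x) ^ k * exp (-x)" for k
  proof -
    have "k < 2 ^ k" by (rule less_exp)
    then have "real k \<le> 2 ^ k" by (metis less_imp_le of_nat_le_iff of_nat_numeral of_nat_power)
    then have "x ^ k * real k \<le> x ^ k * 2 ^ k" using that by (intro mult_left_mono) auto
    then have "(x ^ k * real k) * exp (-x) \<le> (x ^ k * 2 ^ k) * exp (-x)" by (intro mult_right_mono) auto
    then have "(x ^ k * real k) * exp (-x) / fact k \<le> (x ^ k * 2 ^ k) * exp (-x) / fact k"
      by (intro divide_right_mono) auto
    moreover have "norm (norm (x ^ k / fact k * exp (- x) * real k)) = (x ^ k * real k) * exp (-x) / fact k"
      using that by (simp add: abs_mult)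
    moreover have "inverse (fact k) * (2*x) ^ k * exp (-x) = (x ^ k * 2 ^ k) * exp (-x) / fact k"
      by (simp add: power_mult_distrib field_simps)
    ultimately show ?thesis by simp
  qed
  ultimately have "summable (\<lambda>k. norm (x ^ k / fact k * exp (- x) * real k))"
    by (rule summable_comparison_test')
  then show ?thesis
    unfolding measure_pmf_eq_density using that
    by (subst integrable_density) (auto simp: integrable_count_space_nat_iff)
qed

lemma pointwise:
  fixes \<phi> :: "nat \<Rightarrow> real"
  assumes conc: "concave_nat \<phi>" and mono: "mono \<phi>" and z: "\<phi> 0 = 0"
    and n: "n = Suc m"
  shows "measure_pmf.expectation (poisson_pmf (real n)) \<phi> \<ge> (1 - 1 / exp 1) * \<phi> n"
proof -
  define M where "M = measure_pmf (poisson_pmf (real n))"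
  define c where "c = \<phi> n / real n"
  define h where "h = (\<lambda>k. if k < n then real n - real k else 0)"
  have npos: "real n > 0" using n by simp
  have nonneg: "\<phi> k \<ge> 0" for k using mono z by (metis le0 monoD)
  have lin: "\<phi> k \<le> \<phi> 1 * real k" for k
  proof (cases "k = 0")
    case True then show ?thesis using z by simp
  next
    case False then show ?thesis using chord[OF conc z, of 1 k] by (simp add: mult_ac)
  qed
  have lower: "c * (real n - h k) \<le> \<phi> k" for k
  proof (cases "k < n")
    case True
    have "real k * \<phi> n \<le> real n * \<phi> k" using chord[OF conc z, of k n] True by simp
    then show ?thesis using True npos by (simp add: c_def h_def field_simps)
  next
    case False
    then have "\<phi> n \<le> \<phi> k" using mono by (simp add: monoD)
    then show ?thesis using False npos by (simp add: c_def h_def)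
  qed
  have int_real: "integrable M real" unfolding M_def by (rule integrable_poisson_real) (use npos in simp)
  have int_phi: "integrable M \<phi>"
  proof (rule Bochner_Integration.integrable_bound[of M "\<lambda>k. \<phi> 1 * real k"])
    show "integrable M (\<lambda>k. \<phi> 1 * real k)" using int_real by simp
    show "\<phi> \<in> borel_measurable M" unfolding M_def by simp
    show "AE x in M. norm (\<phi> x) \<le> norm (\<phi> 1 * real x)"
      using lin nonneg by (auto intro!: always_eventually simp: abs_of_nonneg)
  qed
  have int_h: "integrable M h"
    unfolding M_def
    by (rule measure_pmf.integrable_const_bound[where B="real n"]) (auto simp: h_def)
  have Eh: "integral\<^sup>L M h = exp (- real n) * (real n ^ Suc m / fact m)"
  proof -
    have "integral\<^sup>L M h = (\<Sum>k<n. h k * pmf (poisson_pmf (real n)) k)"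
      unfolding M_def by (rule integral_measure_pmf_real) (auto simp: h_def split: if_splits)
    also have "\<dots> = (\<Sum>k<Suc m. exp (- real n) * ((real n - real k) * real n ^ k / fact k))"
      using n by (intro sum.cong) (auto simp: h_def)
    also have "\<dots> = exp (- real n) * (real n ^ Suc m / fact m)"
      by (simp only: sum_distrib_left[symmetric] tele_sum)
    finally show ?thesis .
  qed
  have "integral\<^sup>L M (\<lambda>k. c * (real n - h k)) \<le> integral\<^sup>L M \<phi>"
    by (intro integral_mono int_phi lower integrable_mult_right Bochner_Integration.integrable_diff int_h) (simp add: M_def)
  moreover have "integral\<^sup>L M (\<lambda>k. c * (real n - h k)) = c * (real n - integral\<^sup>L M h)"
  proof -
    have "(LINT k|M. real n - h k) = (LINT k|M. real n) - integral\<^sup>L M h"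
      using int_h by (intro Bochner_Integration.integral_diff) (auto simp: M_def)
    also have "(LINT k|M. real n) = real n" by (simp add: M_def)
    finally show ?thesis by simp
  qed
  ultimately have E: "c * (real n - exp (- real n) * (real n ^ Suc m / fact m)) \<le> integral\<^sup>L M \<phi>"
    using Eh by metis
  have st: "real n ^ n \<le> fact n * exp (real m)" using stirling_weak[of m] n by simp
  have key: "exp (- real n) * (real n ^ Suc m / fact m) \<le> real n / exp 1"
  proof -
    have "real n ^ Suc m / fact m = real n * (real n ^ n / fact n)"
      using n by (simp add: fact_Suc field_simps del: of_nat_Suc)
    also have "\<dots> \<le> real n * exp (real m)"
      using st npos by (intro mult_left_mono) (auto simp: divide_le_eq mult_ac)
    finally have "exp (- real n) * (real n ^ Suc m / fact m) \<le> exp (- real n) * (real n * exp (real m))"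
      by (intro mult_left_mono) auto
    also have "\<dots> = real n * (exp (real m) * exp (- real n))" by simp
    also have "exp (real m) * exp (- real n) = exp (- 1)"
      using n by (simp add: exp_add[symmetric])
    finally show ?thesis by (simp add: exp_minus field_simps)
  qed
  have "(1 - 1 / exp 1) * \<phi> n = c * (real n - real n / exp 1)"
    using npos by (simp add: c_def field_simps)
  also have "\<dots> \<le> c * (real n - exp (- real n) * (real n ^ Suc m / fact m))"
    using key nonneg[of n] npos by (intro mult_left_mono) (auto simp: c_def)
  also have "\<dots> \<le> integral\<^sup>L M \<phi>" by (rule E)
  finally show ?thesis unfolding M_def .
qed

theorem mainTheorem2:
  fixes \<phi> :: "nat \<Rightarrow> real"
  assumes "concave_nat \<phi>"
    and "mono \<phi>"
    and "\<phi> 0 = 0"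
    and "\<forall>x\<ge>1. \<phi> x > 0"
  shows "poisson_concavity_ratio \<phi> \<ge> 1 - 1 / exp 1"
  unfolding poisson_concavity_ratio_def
proof (rule cINF_greatest)
  show "{1::nat..} \<noteq> {}" by auto
next
  fix x :: nat assume "x \<in> {1..}"
  then obtain m where n: "x = Suc m" and pos: "\<phi> x > 0" using assms(4) by (cases x) auto
  have "(1 - 1 / exp 1) * \<phi> x \<le> measure_pmf.expectation (poisson_pmf (real x)) \<phi>"
    by (rule pointwise[OF assms(1-3) n])
  then show "1 - 1 / exp 1 \<le> poisson_ratio \<phi> x"
    unfolding poisson_ratio_def using pos by (simp add: le_divide_eq)
qed

end
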